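(* Let $(\sqrt5-1)/4<\alpha<1/2$. If $(x,y)\in A_1$ and $G_\alpha(x,y)\in A_2$, then $G_\alpha^2(x,y)\in A_2$; i.e., a point entering $A_2$ from $A_1$ stays in $A_2$ for at least two steps.
   Context: Let $\tau:[0,1]\to[0,1]$ be the symmetric tent map, $\tau(x)=2x$ for $0\le x<1/2$ and $\tau(x)=2-2x$ for $1/2\le x\le 1$. For $0<\alpha<1$ define $G_\alpha:[0,1]^2\to[0,1]^2$ by $G_\alpha(x,y)=(y,\tau(\alpha y+(1-\alpha)x))$. Let $S(x,y)=\alpha y+(1-\alpha)x$, $A_1=\{(x,y)\in[0,1]^2: S(x,y)<1/2\}$ and $A_2=\{(x,y)\in[0,1]^2: S(x,y)\ge 1/2\}$. *)

theory Defs
  imports Complex_Main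
begin

definition tent :: "real \<Rightarrow> real" where
  "tent x = (if x < 1/2 then 2 * x else 2 - 2 * x)"

definition S :: "real \<Rightarrow> real \<times> real \<Rightarrow> real" where
  "S \<alpha> p = \<alpha> * snd p + (1 - \<alpha>) * fst p"

definition G :: "real \<Rightarrow> real \<times> real \<Rightarrow> real \<times> real" where
  "G \<alpha> p = (snd p, tent (S \<alpha> p))"

definition unit_square :: "(real \<times> real) set" where
  "unit_square = {0..1} \<times> {0..1}"

definition A1 :: "real \<Rightarrow> (real \<times> real) set" where
  "A1 \<alpha> = {p \<in> unit_square. S \<alpha> p < 1/2}"

definition A2 :: "real \<Rightarrow> (real \<times> real) set" where
  "A2 \<alpha> = {p \<in> unit_square. S \<alpha> p \<ge> 1/2}"

end

theory Submission
  imports Defs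
begin

theorem proposition7:
  fixes \<alpha> :: real and p :: "real \<times> real"
  assumes "(sqrt 5 - 1) / 4 < \<alpha>" and "\<alpha> < 1/2"
    and "p \<in> A1 \<alpha>" and "G \<alpha> p \<in> A2 \<alpha>"
  shows "(G \<alpha> ^^ 2) p \<in> A2 \<alpha>"
proof -
  obtain x y where p: "p = (x, y)" by (cases p)
  define s where "s = \<alpha> * y + (1 - \<alpha>) * x"
  have a0: "\<alpha> > 0"
  proof -
    have "sqrt 1 < sqrt 5" by (subst real_sqrt_less_iff) simp
    hence "1 < sqrt 5" by simp
    moreover have "sqrt 5 - 1 < 4*\<alpha>" using assms(1) by (simp add: field_simps)
    ultimately show ?thesis by linarith
  qed
  have q: "4*\<alpha>^2 + 2*\<alpha> - 1 > 0"
  proof -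
    have "sqrt 5 < 4*\<alpha>+1" using assms(1) by simp
    hence "(sqrt 5)^2 < (4*\<alpha>+1)^2"
      by (intro power_strict_mono) auto
    thus ?thesis by (simp add: power2_eq_square algebra_simps)
  qed
  have xy: "0 \<le> x" "x \<le> 1" "0 \<le> y" "y \<le> 1" and s1: "s < 1/2"
    using assms(3) by (auto simp: A1_def unit_square_def S_def p s_def)
  have s0: "s \<ge> \<alpha> * y" using xy a0 assms(2) unfolding s_def
    by (simp add: mult_nonneg_nonneg)
  have Gp: "G \<alpha> p = (y, 2*s)" using s1 by (simp add: G_def p S_def s_def tent_def)
  define t where "t = \<alpha> * (2*s) + (1-\<alpha>)*y"
  have t1: "t \<ge> 1/2" using assms(4) by (simp add: Gp A2_def S_def t_def)
  have G2: "(G \<alpha> ^^ 2) p = (2*s, 2 - 2*t)"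
  proof -
    have "(G \<alpha> ^^ 2) p = G \<alpha> (G \<alpha> p)" by (simp add: numeral_2_eq_2)
    also have "\<dots> = G \<alpha> (y, 2*s)" by (simp add: Gp)
    also have "\<dots> = (2*s, tent t)" by (simp add: G_def S_def t_def)
    also have "tent t = 2 - 2*t" using t1 by (simp add: tent_def)
    finally show ?thesis .
  qed
  have s00: "s \<ge> 0" proof -
    have "0 \<le> \<alpha> * y" using a0 xy by simp
    thus ?thesis using s0 by linarith
  qed
  have tle: "t \<le> 1"
  proof -
    have "\<alpha> * (2*s) \<le> \<alpha>" using s1 a0 by simp
    moreover have "(1-\<alpha>)*y \<le> 1-\<alpha>" using xy assms(2) by (simp add: mult_left_le)
    ultimately show ?thesis unfolding t_def by linarith
  qed
  have key: "\<alpha> * (2 - 2*t) + (1-\<alpha>)*(2*s) \<ge> 1/2"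
  proof -
    have e: "\<alpha> * (2 - 2*t) + (1-\<alpha>)*(2*s) = 2*\<alpha> + s*(2-2*\<alpha>-4*\<alpha>^2) - 2*\<alpha>*(1-\<alpha>)*y"
      unfolding t_def by (simp add: algebra_simps power2_eq_square)
    have "\<alpha>*\<alpha> \<le> \<alpha>*(1/2)" using assms(2) a0 by simp
    hence c: "2-2*\<alpha>-4*\<alpha>^2 \<ge> 0" using assms(2)
      by (simp add: power2_eq_square)
    have "s*(2-2*\<alpha>-4*\<alpha>^2) \<ge> (\<alpha>*y)*(2-2*\<alpha>-4*\<alpha>^2)"
      using mult_right_mono[OF s0 c] .
    hence "\<alpha> * (2 - 2*t) + (1-\<alpha>)*(2*s) \<ge> 2*\<alpha> - 4*\<alpha>^3*y"
      unfolding e by (simp add: algebra_simps power2_eq_square power3_eq_cube)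
    moreover have "4*\<alpha>^3*y \<le> 4*\<alpha>^3" using xy a0 by simp
    moreover have "2*\<alpha> - 4*\<alpha>^3 \<ge> 1/2"
    proof -
      have "(1 - 2*\<alpha>) * (4*\<alpha>^2 + 2*\<alpha> - 1) \<ge> 0" using q assms(2) by simp
      thus ?thesis by (simp add: algebra_simps power2_eq_square power3_eq_cube)
    qed
    ultimately show ?thesis by linarith
  qed
  show ?thesis using key s1 s00 t1 tle
    by (simp add: G2 A2_def unit_square_def S_def)
qed

end
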